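(* Assume $\delta\in(0,1]$. Consider a subcritical sequence of action profiles $(\mathbf p,\mathbf q)$ (not necessarily equilibria) such that $\sup_n\max_i\iota(q_i,q_i)\,n<\infty$. Then the limiting probability that a firm learns $y$ ideas decays exponentially in $y$: there exist constants $C>0$ and $y_0$ such that for every integer $y\ge y_0$, $$\limsup_{n\to\infty}\max_i\mathbb P\big[|I_i(\mathbf p,\mathbf q)|=y\big]\le e^{-Cy}.$$
   Context: Model (for each number of firms $n\ge 2$). There are $n$ firms $1,\dots,n$; firm $i$ can discover a single idea, also labelled $i$. A parameter $\delta\in[0,1]$ is fixed. Each firm $i$ has an action $(p_i,q_i)\in[0,1)\times[0,1]$. Idea $i$ is discovered independently with probability $p_i$; $I$ is the random set of discovered ideas. The interaction rate is $\iota(q_i,q_j)=q_iq_j$. For each ordered pair $i\neq j$, independently, $i$ learns directly from $j$ with probability $\iota(q_i,q_j)$, and conditional on this, independently with probability $\delta$, $i$ also learns indirectly through $j$. The indirect-learning network has an edge $j\to i$ whenever $i$ learns indirectly through $j$. $I_i(\mathbf p,\mathbf q)=\{j\in I\setminus\{i\}:$ some firm $m$, with $m=i$ or with a directed path from $m$ to $i$ in the indirect-learning network, learns directly from $j\}$. Criticality: let $\lambda$ be the spectral radius of the $n\times n$ matrix with $(i,j)$ entry $\delta\iota(q_i,q_j)$; a sequence (indexed by $n\to\infty$) of profiles is subcritical if $\limsup_n\lambda<1$. *)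

theory Defs
  imports "HOL-Probability.Probability" "Jordan_Normal_Form.Spectral_Radius"
begin

text \<open>Firms are indexed by 0,...,n-1. An outcome of the random experiment is a triple
  (disc, dir, ind): disc j = idea j is discovered; dir (i,j) = firm i learns directly
  from firm j; ind (i,j) = the independent coin of probability delta deciding whether i
  also learns indirectly through j (only relevant when dir (i,j) holds).\<close>

type_synonym outcome = "(nat \<Rightarrow> bool) \<times> (nat \<times> nat \<Rightarrow> bool) \<times> (nat \<times> nat \<Rightarrow> bool)"

definition ordered_pairs :: "nat \<Rightarrow> (nat \<times> nat) set" where
  "ordered_pairs n = {(i,j). i < n \<and> j < n \<and> i \<noteq> j}"

definition iota :: "real \<Rightarrow> real \<Rightarrow> real" where
  "iota a b = a * b"

definition outcome_pmf :: "nat \<Rightarrow> real \<Rightarrow> (nat \<Rightarrow> real) \<Rightarrow> (nat \<Rightarrow> real) \<Rightarrow> outcome pmf" where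
  "outcome_pmf n \<delta> p q =
     pair_pmf (Pi_pmf {..<n} False (\<lambda>j. bernoulli_pmf (p j)))
       (pair_pmf (Pi_pmf (ordered_pairs n) False (\<lambda>(i,j). bernoulli_pmf (iota (q i) (q j))))
                 (Pi_pmf (ordered_pairs n) False (\<lambda>_. bernoulli_pmf \<delta>)))"

definition indirect_edges :: "nat \<Rightarrow> outcome \<Rightarrow> (nat \<times> nat) set" where
  "indirect_edges n \<omega> = {(j,i). (i,j) \<in> ordered_pairs n \<and> fst (snd \<omega>) (i,j) \<and> snd (snd \<omega>) (i,j)}"

definition learned_ideas :: "nat \<Rightarrow> nat \<Rightarrow> outcome \<Rightarrow> nat set" where
  "learned_ideas n i \<omega> = {j. j < n \<and> fst \<omega> j \<and> j \<noteq> i \<and>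
      (\<exists>m. (m,i) \<in> (indirect_edges n \<omega>)\<^sup>* \<and> (m,j) \<in> ordered_pairs n \<and> fst (snd \<omega>) (m,j))}"

definition prob_learn :: "nat \<Rightarrow> real \<Rightarrow> (nat \<Rightarrow> real) \<Rightarrow> (nat \<Rightarrow> real) \<Rightarrow> nat \<Rightarrow> nat \<Rightarrow> real" where
  "prob_learn n \<delta> p q i y = measure_pmf.prob (outcome_pmf n \<delta> p q) {\<omega>. card (learned_ideas n i \<omega>) = y}"

definition interaction_matrix :: "nat \<Rightarrow> real \<Rightarrow> (nat \<Rightarrow> real) \<Rightarrow> complex mat" where
  "interaction_matrix n \<delta> q = mat n n (\<lambda>(i,j). complex_of_real (\<delta> * iota (q i) (q j)))"

definition subcritical :: "real \<Rightarrow> (nat \<Rightarrow> nat \<Rightarrow> real) \<Rightarrow> bool" where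
  "subcritical \<delta> q \<longleftrightarrow> limsup (\<lambda>n. ereal (spectral_radius (interaction_matrix n \<delta> (q n)))) < 1"

end

theory Submission
  imports Defs
begin


lemma pair_Pi_pmf:
  assumes "finite A"
  shows "pair_pmf (Pi_pmf A d1 p1) (Pi_pmf A d2 p2) =
    map_pmf (\<lambda>c. (\<lambda>x. fst (c x), \<lambda>x. snd (c x))) (Pi_pmf A (d1,d2) (\<lambda>x. pair_pmf (p1 x) (p2 x)))"
proof (rule pmf_eqI)
  fix fg :: "('a \<Rightarrow> 'b) \<times> ('a \<Rightarrow> 'c)"
  obtain f g where fg: "fg = (f,g)" by (cases fg)
  have inj: "inj (\<lambda>c::'a \<Rightarrow> 'b \<times> 'c. (\<lambda>x. fst (c x), \<lambda>x. snd (c x)))"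
    by (auto simp: inj_def fun_eq_iff prod_eq_iff)
  have e: "(f,g) = (\<lambda>c. (\<lambda>x. fst (c x), \<lambda>x. snd (c x))) (\<lambda>x. (f x, g x))" by simp
  show "pmf (pair_pmf (Pi_pmf A d1 p1) (Pi_pmf A d2 p2)) fg =
    pmf (map_pmf (\<lambda>c. (\<lambda>x. fst (c x), \<lambda>x. snd (c x))) (Pi_pmf A (d1,d2) (\<lambda>x. pair_pmf (p1 x) (p2 x)))) fg"
  proof -
    have "pmf (map_pmf (\<lambda>c. (\<lambda>x. fst (c x), \<lambda>x. snd (c x))) (Pi_pmf A (d1,d2) (\<lambda>x. pair_pmf (p1 x) (p2 x)))) (f,g)
       = pmf (Pi_pmf A (d1,d2) (\<lambda>x. pair_pmf (p1 x) (p2 x))) (\<lambda>x. (f x, g x))"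
      by (subst e, rule pmf_map_inj'[OF inj])
    also have "\<dots> = pmf (pair_pmf (Pi_pmf A d1 p1) (Pi_pmf A d2 p2)) (f,g)"
      using assms by (auto simp: pmf_pair pmf_Pi prod.distrib)
    finally show ?thesis unfolding fg by simp
  qed
qed




type_synonym cfg = "nat \<times> nat \<Rightarrow> bool \<times> bool"

definition Redge :: "nat \<Rightarrow> nat set \<Rightarrow> cfg \<Rightarrow> (nat \<times> nat) set" where
  "Redge n U c = {(a,b). a \<in> U \<and> b \<in> U \<and> (b,a) \<in> ordered_pairs n \<and> c (b,a) = (True,True)}"
definition anc :: "nat \<Rightarrow> nat set \<Rightarrow> nat set \<Rightarrow> cfg \<Rightarrow> nat set" where
  "anc n U W c = {m. \<exists>w\<in>W. (m,w) \<in> (Redge n U c)\<^sup>*}"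
definition deg :: "nat \<Rightarrow> cfg \<Rightarrow> nat \<Rightarrow> nat" where
  "deg n c m = card {j. j < n \<and> j \<noteq> m \<and> fst (c (m,j))}"
definition TT :: "nat \<Rightarrow> nat set \<Rightarrow> nat set \<Rightarrow> cfg \<Rightarrow> nat" where
  "TT n U W c = (\<Sum>m\<in>anc n U W c. deg n c m)"
definition Nb :: "nat \<Rightarrow> cfg \<Rightarrow> nat \<Rightarrow> nat set \<Rightarrow> nat set" where
  "Nb n c w U = {u\<in>U. (w,u) \<in> ordered_pairs n \<and> c (w,u) = (True,True)}"

lemma finite_ordered_pairs: "finite (ordered_pairs n)"
  by (rule finite_subset[of _ "{..<n} \<times> {..<n}"]) (auto simp: ordered_pairs_def)

lemma anc_subset: "W \<subseteq> U \<Longrightarrow> anc n U W c \<subseteq> U"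
proof
  fix m assume W: "W \<subseteq> U" and "m \<in> anc n U W c"
  then obtain w where w: "w \<in> W" "(m,w) \<in> (Redge n U c)\<^sup>*" by (auto simp: anc_def)
  from w(2) show "m \<in> U"
    by (cases rule: converse_rtranclE) (use w W in \<open>auto simp: Redge_def\<close>)
qed

lemma anc_decomp:
  assumes "w \<in> W" "W \<subseteq> U"
  shows "anc n U W c \<subseteq> insert w (anc n (U - {w}) ((W - {w}) \<union> Nb n c w (U - {w})) c)"
proof
  fix m assume "m \<in> anc n U W c"
  then obtain t where t: "t \<in> W" "(m,t) \<in> (Redge n U c)\<^sup>*" by (auto simp: anc_def)
  let ?W' = "(W - {w}) \<union> Nb n c w (U - {w})"
  have sub: "?W' \<subseteq> U - {w}" using assms by (auto simp: Nb_def)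
  from t(2) have "m = w \<or> m \<in> anc n (U - {w}) ?W' c"
  proof (induction rule: converse_rtrancl_induct)
    case base
    then show ?case using t(1) by (auto simp: anc_def)
  next
    case (step m y)
    show ?case
    proof (cases "m = w")
      case True then show ?thesis by simp
    next
      case False
      from step.IH show ?thesis
      proof
        assume "y = w"
        then have "m \<in> Nb n c w (U - {w})" using step.hyps(1) False by (auto simp: Redge_def Nb_def)
        then show ?thesis by (auto simp: anc_def)
      next
        assume y: "y \<in> anc n (U - {w}) ?W' c"
        then have "y \<in> U - {w}" using anc_subset[OF sub] by auto
        with step.hyps(1) False have "(m,y) \<in> Redge n (U - {w}) c" by (auto simp: Redge_def)
        from y obtain t' where "t' \<in> ?W'" "(y,t') \<in> (Redge n (U - {w}) c)\<^sup>*" by (auto simp: anc_def)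
        with \<open>(m,y) \<in> Redge n (U - {w}) c\<close> have "(m,t') \<in> (Redge n (U - {w}) c)\<^sup>*"
          by (meson converse_rtrancl_into_rtrancl)
        with \<open>t' \<in> ?W'\<close> show ?thesis unfolding anc_def by blast
      qed
    qed
  qed
  then show "m \<in> insert w (anc n (U - {w}) ?W' c)" by auto
qed

lemma TT_decomp:
  assumes "finite U" "w \<in> W" "W \<subseteq> U"
  shows "TT n U W c \<le> deg n c w + TT n (U - {w}) ((W - {w}) \<union> Nb n c w (U - {w})) c"
proof -
  let ?A = "anc n (U - {w}) ((W - {w}) \<union> Nb n c w (U - {w})) c"
  have fA: "finite ?A" using anc_subset[of "(W - {w}) \<union> Nb n c w (U - {w})" "U - {w}" n c] assms
    by (auto simp: Nb_def intro: finite_subset)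
  have "TT n U W c \<le> (\<Sum>m\<in>insert w ?A. deg n c m)"
    unfolding TT_def by (rule sum_mono2) (use fA anc_decomp[OF assms(2,3)] in auto)
  also have "\<dots> \<le> deg n c w + (\<Sum>m\<in>?A. deg n c m)"
    using fA by (simp add: sum.insert_if)
  finally show ?thesis unfolding TT_def .
qed

lemma TT_local:
  assumes "W \<subseteq> U" "\<And>i j. i \<in> U \<Longrightarrow> c (i,j) = c' (i,j)"
  shows "TT n U W c = TT n U W c'"
proof -
  have R: "Redge n U c = Redge n U c'" using assms(2) by (auto simp: Redge_def)
  have A: "anc n U W c = anc n U W c'" unfolding anc_def R ..
  show ?thesis unfolding TT_def A
    by (rule sum.cong[OF refl]) (use anc_subset[OF assms(1), of n c'] assms(2) in \<open>auto simp: deg_def\<close>)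
qed




definition cpmf :: "real \<Rightarrow> (nat \<Rightarrow> real) \<Rightarrow> nat \<times> nat \<Rightarrow> (bool \<times> bool) pmf" where
  "cpmf \<delta> q = (\<lambda>(i,j). pair_pmf (bernoulli_pmf (iota (q i) (q j))) (bernoulli_pmf \<delta>))"

lemma Pi_split_nn:
  assumes "finite A" "B \<subseteq> A"
  shows "(\<integral>\<^sup>+c. f c \<partial>Pi_pmf A d p) =
    (\<integral>\<^sup>+x. \<integral>\<^sup>+y. f (\<lambda>i. if i \<in> B then x i else y i) \<partial>Pi_pmf (A - B) d p \<partial>Pi_pmf B d p)"
proof -
  have AB: "A = B \<union> (A - B)" using assms by auto
  have "Pi_pmf A d p = Pi_pmf (B \<union> (A - B)) d p" using AB by simp
  also have "\<dots> = map_pmf (\<lambda>(f,g) x. if x \<in> B then f x else g x)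
             (pair_pmf (Pi_pmf B d p) (Pi_pmf (A - B) d p))"
    using assms by (intro Pi_pmf_union) (auto intro: finite_subset)
  finally show ?thesis by (simp add: nn_integral_pair_pmf')
qed

lemma coord_int:
  fixes r \<delta> z e :: real
  assumes "0 \<le> r" "r \<le> 1" "0 \<le> \<delta>" "\<delta> \<le> 1" "0 \<le> z" "0 \<le> e"
  shows "(\<integral>\<^sup>+v. ennreal ((if fst v then z else 1) * (if v = (True,True) then e else 1))
            \<partial>pair_pmf (bernoulli_pmf r) (bernoulli_pmf \<delta>))
         = ennreal (1 + r * (z * (1 - \<delta> + \<delta> * e) - 1))"
proof -
  have "(\<integral>\<^sup>+v. ennreal ((if fst v then z else 1) * (if v = (True,True) then e else 1))
            \<partial>pair_pmf (bernoulli_pmf r) (bernoulli_pmf \<delta>))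
     = (\<integral>\<^sup>+a. \<integral>\<^sup>+b. ennreal ((if a then z else 1) * (if (a,b) = (True,True) then e else 1))
            \<partial>bernoulli_pmf \<delta> \<partial>bernoulli_pmf r)"
    by (simp add: nn_integral_pair_pmf')
  also have "\<dots> = ennreal ((z * e * \<delta> + z * (1 - \<delta>)) * r + 1 * (1 - r))"
    using assms by (simp add: ennreal_plus[symmetric] ennreal_mult[symmetric] del: ennreal_plus)
  also have "(z * e * \<delta> + z * (1 - \<delta>)) * r + 1 * (1 - r) = 1 + r * (z * (1 - \<delta> + \<delta> * e) - 1)"
    by (simp add: algebra_simps)
  finally show ?thesis .
qed


lemma vertex_int:
  assumes "0 \<le> \<delta>" "\<delta> \<le> 1" "\<And>i. i < n \<Longrightarrow> 0 \<le> q i \<and> q i \<le> 1" "0 \<le> z" "w < n"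
  shows "(\<integral>\<^sup>+x. ennreal (\<Prod>j\<in>{j. j < n \<and> j \<noteq> w}. (if fst (x (w,j)) then z else 1) *
              (if x (w,j) = (True,True) then exp (a * q j) else 1))
           \<partial>Pi_pmf ((\<lambda>j. (w,j)) ` {j. j < n \<and> j \<noteq> w}) (False,False) (cpmf \<delta> q))
       = ennreal (\<Prod>j\<in>{j. j < n \<and> j \<noteq> w}. 1 + q w * q j * (z * (1 - \<delta> + \<delta> * exp (a * q j)) - 1))"
proof -
  define J where "J = {j. j < n \<and> j \<noteq> w}"
  define h where "h = (\<lambda>(p::nat\<times>nat) (v::bool\<times>bool). (if fst v then z else 1) *
              (if v = (True,True) then exp (a * q (snd p)) else 1))"
  have fJ: "finite J" by (auto simp: J_def)
  have inj: "inj_on (\<lambda>j. (w,j)) J" by (auto simp: inj_on_def)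
  have hnn: "0 \<le> h p v" for p v using assms(4) by (auto simp: h_def)
  have eq1: "ennreal (\<Prod>j\<in>J. (if fst (x (w,j)) then z else 1) *
              (if x (w,j) = (True,True) then exp (a * q j) else 1))
        = (\<Prod>p\<in>(\<lambda>j. (w,j)) ` J. ennreal (h p (x p)))" for x
  proof -
    have "(\<Prod>p\<in>(\<lambda>j. (w,j)) ` J. ennreal (h p (x p))) = (\<Prod>j\<in>J. ennreal (h (w,j) (x (w,j))))"
      by (subst prod.reindex[OF inj]) simp
    also have "\<dots> = ennreal (\<Prod>j\<in>J. h (w,j) (x (w,j)))"
      by (rule prod_ennreal) (simp add: hnn)
    finally show ?thesis unfolding h_def by (simp only: prod.case snd_conv fst_conv split_beta)
  qed
  have "(\<integral>\<^sup>+x. ennreal (\<Prod>j\<in>J. (if fst (x (w,j)) then z else 1) *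
              (if x (w,j) = (True,True) then exp (a * q j) else 1))
           \<partial>Pi_pmf ((\<lambda>j. (w,j)) ` J) (False,False) (cpmf \<delta> q))
     = (\<integral>\<^sup>+x. (\<Prod>p\<in>(\<lambda>j. (w,j)) ` J. ennreal (h p (x p))) \<partial>Pi_pmf ((\<lambda>j. (w,j)) ` J) (False,False) (cpmf \<delta> q))"
    by (simp only: eq1)
  also have "\<dots> = (\<Prod>p\<in>(\<lambda>j. (w,j)) ` J. \<integral>\<^sup>+v. ennreal (h p v) \<partial>cpmf \<delta> q p)"
    using fJ by (intro nn_integral_prod_Pi_pmf) auto
  also have "\<dots> = (\<Prod>j\<in>J. \<integral>\<^sup>+v. ennreal (h (w,j) v) \<partial>cpmf \<delta> q (w,j))"
    by (subst prod.reindex[OF inj]) simp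
  also have "\<dots> = (\<Prod>j\<in>J. ennreal (1 + q w * q j * (z * (1 - \<delta> + \<delta> * exp (a * q j)) - 1)))"
  proof (rule prod.cong[OF refl])
    fix j assume j: "j \<in> J"
    have qj: "0 \<le> q j" "q j \<le> 1" "0 \<le> q w" "q w \<le> 1" using assms(3,5) j by (auto simp: J_def)
    have r: "0 \<le> q w * q j" "q w * q j \<le> 1" using qj by (auto intro: mult_le_one)
    show "(\<integral>\<^sup>+v. ennreal (h (w,j) v) \<partial>cpmf \<delta> q (w,j)) = ennreal (1 + q w * q j * (z * (1 - \<delta> + \<delta> * exp (a * q j)) - 1))"
      unfolding cpmf_def h_def iota_def using coord_int[OF r assms(1,2,4), of "exp (a * q j)"] by (simp only: prod.case snd_conv) simp
  qed
  also have "\<dots> = ennreal (\<Prod>j\<in>J. 1 + q w * q j * (z * (1 - \<delta> + \<delta> * exp (a * q j)) - 1))"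
  proof (rule prod_ennreal)
    fix j assume j: "j \<in> J"
    have qj: "0 \<le> q j" "q j \<le> 1" "0 \<le> q w" "q w \<le> 1" using assms(3,5) j by (auto simp: J_def)
    have r: "0 \<le> q w * q j" "q w * q j \<le> 1" using qj by (auto intro: mult_le_one)
    have "0 \<le> z * (1 - \<delta> + \<delta> * exp (a * q j))" using assms by auto
    then have "-1 \<le> z * (1 - \<delta> + \<delta> * exp (a * q j)) - 1" by linarith
    then have "q w * q j * (-1) \<le> q w * q j * (z * (1 - \<delta> + \<delta> * exp (a * q j)) - 1)"
      using r by (intro mult_left_mono) auto
    then show "0 \<le> 1 + q w * q j * (z * (1 - \<delta> + \<delta> * exp (a * q j)) - 1)" using r by linarith
  qed
  finally show ?thesis unfolding J_def .
qed




lemma deg_mg: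
  assumes "\<And>j. j < n \<Longrightarrow> j \<noteq> w \<Longrightarrow> c (w,j) = c' (w,j)"
  shows "deg n c w = deg n c' w"
  unfolding deg_def using assms by (metis (no_types, lifting))

lemma Nb_mg:
  assumes "\<And>j. (w,j) \<in> ordered_pairs n \<Longrightarrow> c (w,j) = c' (w,j)"
  shows "Nb n c w U = Nb n c' w U"
  unfolding Nb_def using assms by auto

lemma main_bound:
  fixes n :: nat and \<delta> z a :: real and q :: "nat \<Rightarrow> real"
  assumes \<delta>: "0 \<le> \<delta>" "\<delta> \<le> 1" and qb: "\<And>i. i < n \<Longrightarrow> 0 \<le> q i \<and> q i \<le> 1"
    and z: "1 \<le> z" and a: "0 \<le> a"
    and PV: "\<And>w. w < n \<Longrightarrow> (\<Prod>j\<in>{j. j < n \<and> j \<noteq> w}. 1 + q w * q j * (z * (1 - \<delta> + \<delta> * exp (a * q j)) - 1)) \<le> exp (a * q w)"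
  shows "U \<subseteq> {..<n} \<Longrightarrow> W \<subseteq> U \<Longrightarrow>
    (\<integral>\<^sup>+c. ennreal (z ^ TT n U W c) \<partial>Pi_pmf (ordered_pairs n) (False,False) (cpmf \<delta> q))
      \<le> ennreal (exp (a * (\<Sum>w\<in>W. q w)))"
proof (induction "card U" arbitrary: U W rule: less_induct)
  case less
  let ?M = "Pi_pmf (ordered_pairs n) (False,False) (cpmf \<delta> q)"
  have finU: "finite U" using less.prems(1) finite_subset by blast
  show ?case
  proof (cases "W = {}")
    case True
    then have "TT n U W c = 0" for c by (simp add: TT_def anc_def)
    then show ?thesis using True by (simp add: measure_pmf.emeasure_space_1)
  next
    case False
    then obtain w where w: "w \<in> W" by auto
    have wn: "w < n" using w less.prems by auto
    define U' where "U' = U - {w}"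
    define A where "A = ordered_pairs n"
    define J where "J = {j. j < n \<and> j \<noteq> w}"
    define Pw where "Pw = (\<lambda>j. (w,j)) ` J"
    have PwA: "Pw \<subseteq> A" using wn by (auto simp: Pw_def J_def A_def ordered_pairs_def)
    have finA: "finite A" unfolding A_def by (rule finite_ordered_pairs)
    have finW: "finite W" using less.prems finU finite_subset by blast
    define mg :: "cfg \<Rightarrow> cfg \<Rightarrow> cfg" where "mg = (\<lambda>x y i. if i \<in> Pw then x i else y i)"
    define W' where "W' = (\<lambda>x. (W - {w}) \<union> Nb n x w U')"
    have W'sub: "W' x \<subseteq> U'" for x using less.prems by (auto simp: W'_def U'_def Nb_def)
    have cardU': "card U' < card U" using finU w less.prems unfolding U'_def
      by (meson card_Diff1_less subsetD)
    have U'n: "U' \<subseteq> {..<n}" using less.prems by (auto simp: U'_def)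
    have loc: "TT n U' (W' x) (mg x' y) = TT n U' (W' x) y" for x x' y
      by (rule TT_local[OF W'sub]) (auto simp: mg_def Pw_def U'_def)
    have indep: "(\<integral>\<^sup>+y. ennreal (z ^ TT n U' (W' x) y) \<partial>Pi_pmf (A - Pw) (False,False) (cpmf \<delta> q))
        = (\<integral>\<^sup>+c. ennreal (z ^ TT n U' (W' x) c) \<partial>?M)" for x
    proof -
      have "(\<integral>\<^sup>+c. ennreal (z ^ TT n U' (W' x) c) \<partial>?M) =
          (\<integral>\<^sup>+x'. \<integral>\<^sup>+y. ennreal (z ^ TT n U' (W' x) (mg x' y)) \<partial>Pi_pmf (A - Pw) (False,False) (cpmf \<delta> q)
              \<partial>Pi_pmf Pw (False,False) (cpmf \<delta> q))"
        unfolding A_def[symmetric] mg_def by (rule Pi_split_nn[OF finA PwA])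
      also have "\<dots> = (\<integral>\<^sup>+x'. (\<integral>\<^sup>+y. ennreal (z ^ TT n U' (W' x) y) \<partial>Pi_pmf (A - Pw) (False,False) (cpmf \<delta> q))
              \<partial>Pi_pmf Pw (False,False) (cpmf \<delta> q))"
        by (simp only: loc)
      also have "\<dots> = (\<integral>\<^sup>+y. ennreal (z ^ TT n U' (W' x) y) \<partial>Pi_pmf (A - Pw) (False,False) (cpmf \<delta> q))"
        by (simp add: measure_pmf.emeasure_space_1)
      finally show ?thesis by simp
    qed
    have IH: "(\<integral>\<^sup>+c. ennreal (z ^ TT n U' (W' x) c) \<partial>?M) \<le> ennreal (exp (a * (\<Sum>u\<in>W' x. q u)))" for x
      using less.hyps[OF cardU' U'n W'sub] .

    have ptw: "ennreal (z ^ TT n U W (mg x y)) \<le> ennreal (z ^ deg n x w) * ennreal (z ^ TT n U' (W' x) y)" for x y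
    proof -
      have d: "deg n (mg x y) w = deg n x w" by (rule deg_mg) (auto simp: mg_def Pw_def J_def)
      have nb: "Nb n (mg x y) w U' = Nb n x w U'"
        by (rule Nb_mg) (auto simp: mg_def Pw_def J_def ordered_pairs_def)
      have "TT n U W (mg x y) \<le> deg n (mg x y) w + TT n U' ((W - {w}) \<union> Nb n (mg x y) w U') (mg x y)"
        using TT_decomp[OF finU w less.prems(2)] unfolding U'_def .
      also have "\<dots> = deg n x w + TT n U' (W' x) y" using d nb loc by (simp add: W'_def)
      finally have "z ^ TT n U W (mg x y) \<le> z ^ (deg n x w + TT n U' (W' x) y)"
        by (rule power_increasing[OF _ z])
      then show ?thesis using z by (simp add: power_add ennreal_mult[symmetric])
    qed
    have qnn: "\<And>u. u \<in> U \<Longrightarrow> 0 \<le> q u" using qb less.prems(1) by auto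
    have sumW': "exp (a * (\<Sum>u\<in>W' x. q u)) \<le> exp (a * (\<Sum>u\<in>W - {w}. q u)) * exp (a * (\<Sum>u\<in>Nb n x w U'. q u))" for x
    proof -
      have f1: "finite (W - {w})" using finW by auto
      have f2: "finite (Nb n x w U')" using finU by (auto simp: Nb_def U'_def)
      have "(\<Sum>u\<in>W' x. q u) + (\<Sum>u\<in>(W - {w}) \<inter> Nb n x w U'. q u) = (\<Sum>u\<in>W - {w}. q u) + (\<Sum>u\<in>Nb n x w U'. q u)"
        unfolding W'_def by (rule sum.union_inter[OF f1 f2])
      moreover have "0 \<le> (\<Sum>u\<in>(W - {w}) \<inter> Nb n x w U'. q u)"
        by (rule sum_nonneg) (use qnn less.prems in auto)
      ultimately have "(\<Sum>u\<in>W' x. q u) \<le> (\<Sum>u\<in>W - {w}. q u) + (\<Sum>u\<in>Nb n x w U'. q u)" by linarith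
      then have "a * (\<Sum>u\<in>W' x. q u) \<le> a * (\<Sum>u\<in>W - {w}. q u) + a * (\<Sum>u\<in>Nb n x w U'. q u)"
        using a by (simp add: distrib_left[symmetric] mult_left_mono)
      then show ?thesis by (simp add: exp_add[symmetric])
    qed
    define G where "G = (\<lambda>x::cfg. ennreal (\<Prod>j\<in>J. (if fst (x (w,j)) then z else 1) *
              (if x (w,j) = (True,True) then exp (a * q j) else 1)))"
    have Gb: "ennreal (z ^ deg n x w) * ennreal (exp (a * (\<Sum>u\<in>Nb n x w U'. q u))) \<le> G x" for x
    proof -
      have fJ: "finite J" by (simp add: J_def)
      have "deg n x w = card {j\<in>J. fst (x (w,j))}" by (simp add: deg_def J_def conj_assoc)
      then have e1: "z ^ deg n x w = (\<Prod>j\<in>J. if fst (x (w,j)) then z else 1)"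
        using fJ by (simp add: prod.inter_filter[symmetric])
      have "(\<Sum>u\<in>Nb n x w U'. q u) \<le> (\<Sum>u\<in>{j\<in>J. x (w,j) = (True,True)}. q u)"
        by (rule sum_mono2) (use fJ qb in \<open>auto simp: Nb_def J_def U'_def ordered_pairs_def\<close>)
      then have "exp (a * (\<Sum>u\<in>Nb n x w U'. q u)) \<le> exp (a * (\<Sum>u\<in>{j\<in>J. x (w,j) = (True,True)}. q u))"
        using a by (simp add: mult_left_mono)
      also have "\<dots> = (\<Prod>u\<in>{j\<in>J. x (w,j) = (True,True)}. exp (a * q u))"
        using fJ by (simp add: exp_sum sum_distrib_left)
      also have "\<dots> = (\<Prod>j\<in>J. if x (w,j) = (True,True) then exp (a * q j) else 1)"
        using fJ by (simp add: prod.inter_filter)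
      finally have e2: "exp (a * (\<Sum>u\<in>Nb n x w U'. q u)) \<le> (\<Prod>j\<in>J. if x (w,j) = (True,True) then exp (a * q j) else 1)" .
      have "z ^ deg n x w * exp (a * (\<Sum>u\<in>Nb n x w U'. q u)) \<le>
            (\<Prod>j\<in>J. if fst (x (w,j)) then z else 1) * (\<Prod>j\<in>J. if x (w,j) = (True,True) then exp (a * q j) else 1)"
        unfolding e1 by (rule mult_left_mono[OF e2]) (use z in \<open>auto intro: prod_nonneg\<close>)
      then show ?thesis unfolding G_def using z by (simp add: ennreal_mult[symmetric] prod.distrib ennreal_leI)
    qed
    let ?R = "Pi_pmf (A - Pw) (False,False) (cpmf \<delta> q)"
    let ?P = "Pi_pmf Pw (False,False) (cpmf \<delta> q)"
    let ?e0 = "ennreal (exp (a * (\<Sum>u\<in>W - {w}. q u)))"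
    have "(\<integral>\<^sup>+c. ennreal (z ^ TT n U W c) \<partial>?M) = (\<integral>\<^sup>+x. \<integral>\<^sup>+y. ennreal (z ^ TT n U W (mg x y)) \<partial>?R \<partial>?P)"
      unfolding A_def[symmetric] mg_def by (rule Pi_split_nn[OF finA PwA])
    also have "\<dots> \<le> (\<integral>\<^sup>+x. ennreal (z ^ deg n x w) * (\<integral>\<^sup>+y. ennreal (z ^ TT n U' (W' x) y) \<partial>?R) \<partial>?P)"
      by (intro nn_integral_mono) (simp add: nn_integral_cmult[symmetric] nn_integral_mono ptw)
    also have "\<dots> = (\<integral>\<^sup>+x. ennreal (z ^ deg n x w) * (\<integral>\<^sup>+c. ennreal (z ^ TT n U' (W' x) c) \<partial>?M) \<partial>?P)"
      by (simp only: indep)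
    also have "\<dots> \<le> (\<integral>\<^sup>+x. ennreal (z ^ deg n x w) * ennreal (exp (a * (\<Sum>u\<in>W' x. q u))) \<partial>?P)"
      by (intro nn_integral_mono mult_left_mono IH) simp
    also have "\<dots> \<le> (\<integral>\<^sup>+x. ?e0 * G x \<partial>?P)"
    proof (intro nn_integral_mono)
      fix x
      have "ennreal (z ^ deg n x w) * ennreal (exp (a * (\<Sum>u\<in>W' x. q u)))
         \<le> ennreal (z ^ deg n x w) * (?e0 * ennreal (exp (a * (\<Sum>u\<in>Nb n x w U'. q u))))"
        by (intro mult_left_mono) (use sumW'[of x] in \<open>simp_all add: ennreal_mult[symmetric]\<close>)
      also have "\<dots> = ?e0 * (ennreal (z ^ deg n x w) * ennreal (exp (a * (\<Sum>u\<in>Nb n x w U'. q u))))"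
        by (simp add: ac_simps)
      also have "\<dots> \<le> ?e0 * G x" by (intro mult_left_mono Gb) simp
      finally show "ennreal (z ^ deg n x w) * ennreal (exp (a * (\<Sum>u\<in>W' x. q u))) \<le> ?e0 * G x" .
    qed
    also have "\<dots> = ?e0 * (\<integral>\<^sup>+x. G x \<partial>?P)" by (simp add: nn_integral_cmult)
    also have "(\<integral>\<^sup>+x. G x \<partial>?P) = ennreal (\<Prod>j\<in>J. 1 + q w * q j * (z * (1 - \<delta> + \<delta> * exp (a * q j)) - 1))"
      unfolding G_def Pw_def J_def using vertex_int[where z=z and a=a and w=w and n=n and q=q, OF \<delta> qb _ wn] z by simp
    also have "?e0 * \<dots> \<le> ?e0 * ennreal (exp (a * q w))"
      using PV[OF wn] by (intro mult_left_mono) (auto simp: J_def)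
    also have "\<dots> = ennreal (exp (a * (\<Sum>u\<in>W. q u)))"
      using finW w by (simp add: ennreal_mult[symmetric] exp_add[symmetric] sum.remove distrib_left)
    finally show ?thesis .
  qed
qed




lemma expm1_le: "0 \<le> (x::real) \<Longrightarrow> exp x - 1 \<le> x * exp x"
proof -
  assume "0 \<le> x"
  have "1 + (-x) \<le> exp (-x)" by (rule exp_ge_add_one_self)
  then have "(1 - x) * exp x \<le> exp (-x) * exp x" by (intro mult_right_mono) auto
  then show ?thesis by (simp add: exp_minus field_simps)
qed

lemma PV_num:
  fixes q :: "nat \<Rightarrow> real"
  assumes "0 \<le> \<delta>" "\<delta> \<le> 1" "\<And>j. j < n \<Longrightarrow> 0 \<le> q j" "1 \<le> z" "0 \<le> a"
    "\<And>j. j < n \<Longrightarrow> a * q j \<le> b"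
    "(z - 1) * (\<Sum>j<n. q j) + z * exp b * a * (\<delta> * (\<Sum>j<n. q j ^ 2)) \<le> a" "w < n"
  shows "(\<Prod>j\<in>{j. j < n \<and> j \<noteq> w}. 1 + q w * q j * (z * (1 - \<delta> + \<delta> * exp (a * q j)) - 1)) \<le> exp (a * q w)"
proof -
  define X where "X = (\<lambda>j. z * (1 - \<delta> + \<delta> * exp (a * q j)) - 1)"
  have Xnn: "0 \<le> X j" if "j < n" for j
  proof -
    have "1 \<le> exp (a * q j)" using assms(3,5) that by auto
    then have "\<delta> * 1 \<le> \<delta> * exp (a * q j)" using assms(1) by (rule mult_left_mono)
    then have y1: "1 \<le> 1 - \<delta> + \<delta> * exp (a * q j)" by simp
    have "1 * 1 \<le> z * (1 - \<delta> + \<delta> * exp (a * q j))"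
      by (rule mult_mono[OF assms(4) y1]) (use assms(4) in auto)
    then have "1 \<le> z * (1 - \<delta> + \<delta> * exp (a * q j))" by simp
    then show ?thesis by (simp add: X_def)
  qed
  have Xle: "X j \<le> (z - 1) + z * \<delta> * exp b * a * q j" if "j < n" for j
  proof -
    have x0: "0 \<le> a * q j" using assms(3,5) that by auto
    have "exp (a * q j) - 1 \<le> a * q j * exp (a * q j)" by (rule expm1_le[OF x0])
    also have "\<dots> \<le> a * q j * exp b" using assms(6)[OF that] x0 by (intro mult_left_mono) auto
    finally have e: "exp (a * q j) - 1 \<le> a * q j * exp b" .
    have "X j = (z - 1) + z * \<delta> * (exp (a * q j) - 1)" by (simp add: X_def algebra_simps)
    also have "\<dots> \<le> (z - 1) + z * \<delta> * (a * q j * exp b)"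
      using e assms(1,4) by (intro add_left_mono mult_left_mono) auto
    finally show ?thesis by (simp add: algebra_simps)
  qed
  have qw: "0 \<le> q w" using assms(3,8) .
  define J where "J = {j. j < n \<and> j \<noteq> w}"
  have fJ: "finite J" by (simp add: J_def)
  have "(\<Prod>j\<in>J. 1 + q w * q j * X j) \<le> (\<Prod>j\<in>J. exp (q w * q j * X j))"
  proof (rule prod_mono)
    fix j assume "j \<in> J"
    then have j: "j < n" by (simp add: J_def)
    have "0 \<le> q w * q j * X j" using qw assms(3)[OF j] Xnn[OF j] by simp
    then show "0 \<le> 1 + q w * q j * X j \<and> 1 + q w * q j * X j \<le> exp (q w * q j * X j)"
      by (simp add: add.commute exp_ge_add_one_self)
  qed
  also have "\<dots> = exp (\<Sum>j\<in>J. q w * q j * X j)" using fJ by (simp add: exp_sum)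
  finally have P1: "(\<Prod>j\<in>J. 1 + q w * q j * X j) \<le> exp (\<Sum>j\<in>J. q w * q j * X j)" .
  have S1: "(\<Sum>j\<in>J. q w * q j * X j) \<le> (\<Sum>j<n. q w * q j * X j)"
    by (rule sum_mono2) (use qw assms(3) Xnn in \<open>auto simp: J_def\<close>)
  have S2: "(\<Sum>j<n. q w * q j * X j) = q w * (\<Sum>j<n. q j * X j)" by (simp add: sum_distrib_left mult.assoc)
  have S3: "(\<Sum>j<n. q j * X j) \<le> (\<Sum>j<n. q j * ((z - 1) + z * \<delta> * exp b * a * q j))"
    by (rule sum_mono) (use assms(3) Xle in \<open>auto intro: mult_left_mono\<close>)
  have S4: "(\<Sum>j<n. q j * ((z - 1) + z * \<delta> * exp b * a * q j)) = (z - 1) * (\<Sum>j<n. q j) + z * exp b * a * (\<delta> * (\<Sum>j<n. q j ^ 2))"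
  proof -
    have "(\<Sum>j<n. q j * ((z - 1) + z * \<delta> * exp b * a * q j)) = (\<Sum>j<n. (z - 1) * q j + (z * exp b * a * \<delta>) * q j ^ 2)"
      by (rule sum.cong) (auto simp: algebra_simps power2_eq_square)
    also have "\<dots> = (z - 1) * (\<Sum>j<n. q j) + (z * exp b * a * \<delta>) * (\<Sum>j<n. q j ^ 2)"
      by (simp add: sum.distrib sum_distrib_left)
    finally show ?thesis by (simp add: mult.assoc)
  qed
  have "(\<Sum>j<n. q j * X j) \<le> a" using S3 S4 assms(7) by linarith
  then have "q w * (\<Sum>j<n. q j * X j) \<le> q w * a" using qw by (rule mult_left_mono)
  then have "(\<Sum>j\<in>J. q w * q j * X j) \<le> a * q w" using S1 S2 by (simp add: mult.commute)
  then have "exp (\<Sum>j\<in>J. q w * q j * X j) \<le> exp (a * q w)" by simp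
  with P1 show ?thesis unfolding X_def J_def by linarith
qed




lemma learned_le_TT:
  assumes "i < n"
  shows "card (learned_ideas n i \<omega>) \<le> TT n {..<n} {i} (\<lambda>x. (fst (snd \<omega>) x, snd (snd \<omega>) x))"
proof -
  define c :: cfg where "c = (\<lambda>x. (fst (snd \<omega>) x, snd (snd \<omega>) x))"
  have sub: "indirect_edges n \<omega> \<subseteq> Redge n {..<n} c"
    by (auto simp: indirect_edges_def Redge_def c_def ordered_pairs_def)
  define Anc where "Anc = anc n {..<n} {i} c"
  have fAnc: "finite Anc" unfolding Anc_def
    by (rule finite_subset[OF anc_subset]) (use assms in auto)
  have "learned_ideas n i \<omega> \<subseteq> (\<Union>m\<in>Anc. {j. j < n \<and> j \<noteq> m \<and> fst (c (m,j))})"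
  proof
    fix j assume "j \<in> learned_ideas n i \<omega>"
    then obtain m where m: "(m,i) \<in> (indirect_edges n \<omega>)\<^sup>*" "(m,j) \<in> ordered_pairs n" "fst (snd \<omega>) (m,j)"
      and j: "j < n" unfolding learned_ideas_def by auto
    have "(m,i) \<in> (Redge n {..<n} c)\<^sup>*" using rtrancl_mono[OF sub] m(1) by auto
    then have "m \<in> Anc" by (auto simp: Anc_def anc_def)
    then show "j \<in> (\<Union>m\<in>Anc. {j. j < n \<and> j \<noteq> m \<and> fst (c (m,j))})"
      using m j by (auto simp: c_def ordered_pairs_def)
  qed
  then have "card (learned_ideas n i \<omega>) \<le> card (\<Union>m\<in>Anc. {j. j < n \<and> j \<noteq> m \<and> fst (c (m,j))})"
    by (rule card_mono[rotated]) (use fAnc in auto)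
  also have "\<dots> \<le> (\<Sum>m\<in>Anc. card {j. j < n \<and> j \<noteq> m \<and> fst (c (m,j))})"
    by (rule card_UN_le[OF fAnc])
  also have "\<dots> = TT n {..<n} {i} c" by (simp add: TT_def Anc_def deg_def)
  finally show ?thesis by (simp add: c_def)
qed

lemma markov_TT:
  fixes M :: "'a pmf"
  assumes "1 \<le> z" "(\<integral>\<^sup>+c. ennreal (z ^ T c) \<partial>M) \<le> ennreal K" "0 \<le> K"
  shows "measure_pmf.prob M {c. y \<le> T c} \<le> K / z ^ y"
proof -
  have zy: "0 < z ^ y" using assms(1) by simp
  have "ennreal (z ^ y) * emeasure M {c. y \<le> T c} = (\<integral>\<^sup>+c. ennreal (z ^ y) * indicator {c. y \<le> T c} c \<partial>M)"
    by (simp add: nn_integral_cmult_indicator)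
  also have "\<dots> \<le> (\<integral>\<^sup>+c. ennreal (z ^ T c) \<partial>M)"
    by (intro nn_integral_mono) (auto simp: indicator_def intro!: ennreal_leI power_increasing assms(1))
  also have "\<dots> \<le> ennreal K" by (rule assms(2))
  finally have "ennreal (z ^ y * measure_pmf.prob M {c. y \<le> T c}) \<le> ennreal K"
    using zy by (simp add: measure_pmf.emeasure_eq_measure ennreal_mult)
  then have "z ^ y * measure_pmf.prob M {c. y \<le> T c} \<le> K"
    using assms(3) by (simp add: ennreal_le_iff)
  then show ?thesis using zy by (simp add: field_simps)
qed




lemma prob_learn_bound:
  fixes q p :: "nat \<Rightarrow> real"
  assumes \<delta>: "0 \<le> \<delta>" "\<delta> \<le> 1" and qb: "\<And>i. i < n \<Longrightarrow> 0 \<le> q i \<and> q i \<le> 1"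
    and z: "1 \<le> z" and a: "0 \<le> a"
    and PV: "\<And>w. w < n \<Longrightarrow> (\<Prod>j\<in>{j. j < n \<and> j \<noteq> w}. 1 + q w * q j * (z * (1 - \<delta> + \<delta> * exp (a * q j)) - 1)) \<le> exp (a * q w)"
    and i: "i < n"
  shows "prob_learn n \<delta> p q i y \<le> exp (a * q i) / z ^ y"
proof -
  let ?M = "Pi_pmf (ordered_pairs n) (False,False) (cpmf \<delta> q)"
  let ?g = "\<lambda>c::cfg. (\<lambda>x. fst (c x), \<lambda>x. snd (c x))"
  let ?D = "Pi_pmf {..<n} False (\<lambda>j. bernoulli_pmf (p j))"
  have cp: "(\<lambda>x. pair_pmf ((\<lambda>(i,j). bernoulli_pmf (iota (q i) (q j))) x) ((\<lambda>_. bernoulli_pmf \<delta>) x)) = cpmf \<delta> q"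
    by (auto simp: cpmf_def fun_eq_iff split: prod.split)
  have om: "outcome_pmf n \<delta> p q = pair_pmf ?D (map_pmf ?g ?M)"
    unfolding outcome_pmf_def
    by (subst pair_Pi_pmf[OF finite_ordered_pairs]) (simp only: cp)
  define P where "P = (\<lambda>v::(nat \<times> nat \<Rightarrow> bool) \<times> (nat \<times> nat \<Rightarrow> bool). y \<le> TT n {..<n} {i} (\<lambda>x. (fst v x, snd v x)))"
  have "prob_learn n \<delta> p q i y \<le> measure_pmf.prob (outcome_pmf n \<delta> p q) (snd -` {v. P v})"
    unfolding prob_learn_def
    by (rule measure_pmf.finite_measure_mono) (use learned_le_TT[OF i] in \<open>auto simp: P_def\<close>)
  also have "\<dots> = measure_pmf.prob (map_pmf snd (outcome_pmf n \<delta> p q)) {v. P v}"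
    by (simp add: measure_map_pmf)
  also have "\<dots> = measure_pmf.prob (map_pmf ?g ?M) {v. P v}"
    by (simp add: om map_snd_pair_pmf)
  also have "\<dots> = measure_pmf.prob ?M {c. y \<le> TT n {..<n} {i} c}"
    by (simp add: measure_map_pmf P_def vimage_def)
  also have "\<dots> \<le> exp (a * q i) / z ^ y"
  proof (rule markov_TT[OF z])
    show "(\<integral>\<^sup>+c. ennreal (z ^ TT n {..<n} {i} c) \<partial>?M) \<le> ennreal (exp (a * q i))"
      using main_bound[OF \<delta> qb z a PV, of "{..<n}" "{i}"] i by simp
  qed simp
  finally show ?thesis .
qed




lemma sr_lower:
  fixes q :: "nat \<Rightarrow> real"
  assumes n: "0 < n" and d: "0 \<le> \<delta>"
  shows "\<delta> * (\<Sum>i<n. q i ^ 2) \<le> spectral_radius (interaction_matrix n \<delta> q)"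
proof -
  let ?A = "interaction_matrix n \<delta> q"
  have A: "?A \<in> carrier_mat n n" by (simp add: interaction_matrix_def)
  have sr0: "0 \<le> spectral_radius ?A" using spectral_radius_mem_max(1)[OF A n] by auto
  show ?thesis
  proof (cases "\<forall>i<n. q i = 0")
    case True
    then have "(\<Sum>i<n. q i ^ 2) = 0" by simp
    then show ?thesis using sr0 by simp
  next
    case False
    then obtain k where k: "k < n" "q k \<noteq> 0" by auto
    define s where "s = (\<Sum>j<n. q j ^ 2)"
    define v where "v = vec n (\<lambda>i. complex_of_real (q i))"
    have v: "v \<in> carrier_vec n" by (simp add: v_def)
    have v0: "v \<noteq> 0\<^sub>v n"
    proof
      assume "v = 0\<^sub>v n"
      then have "v $ k = 0" using k by simp
      then show False using k by (simp add: v_def)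
    qed
    have Av: "?A *\<^sub>v v = complex_of_real (\<delta> * s) \<cdot>\<^sub>v v"
    proof (rule eq_vecI)
      fix i assume i: "i < dim_vec (complex_of_real (\<delta> * s) \<cdot>\<^sub>v v)"
      then have i': "i < n" by (simp add: v_def)
      have "(?A *\<^sub>v v) $ i = (\<Sum>j<n. complex_of_real (\<delta> * iota (q i) (q j)) * complex_of_real (q j))"
        using i' by (simp add: interaction_matrix_def v_def scalar_prod_def lessThan_atLeast0)
      also have "\<dots> = complex_of_real (\<Sum>j<n. \<delta> * iota (q i) (q j) * q j)" by simp
      also have "(\<Sum>j<n. \<delta> * iota (q i) (q j) * q j) = \<delta> * s * q i"
        by (simp add: s_def iota_def sum_distrib_left sum_distrib_right power2_eq_square algebra_simps)
      finally show "(?A *\<^sub>v v) $ i = (complex_of_real (\<delta> * s) \<cdot>\<^sub>v v) $ i"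
        using i' by (simp add: v_def)
    qed (simp add: interaction_matrix_def v_def)
    have "eigenvalue ?A (complex_of_real (\<delta> * s))"
      unfolding eigenvalue_def eigenvector_def using v v0 Av A by auto
    then have "cmod (complex_of_real (\<delta> * s)) \<in> norm ` spectrum ?A"
      by (auto simp: spectrum_def)
    then have "cmod (complex_of_real (\<delta> * s)) \<le> spectral_radius ?A"
      by (rule spectral_radius_mem_max(2)[OF A n])
    moreover have "0 \<le> \<delta> * s" using d by (simp add: s_def sum_nonneg)
    ultimately show ?thesis unfolding norm_of_real by (simp add: s_def del: of_real_mult of_real_sum of_real_power)
  qed
qed




theorem lemmaA4:
  fixes \<delta> :: real and p q :: "nat \<Rightarrow> nat \<Rightarrow> real"
  assumes "0 < \<delta>" and "\<delta> \<le> 1"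
    and "\<And>n i. 2 \<le> n \<Longrightarrow> i < n \<Longrightarrow> 0 \<le> p n i \<and> p n i < 1"
    and "\<And>n i. 2 \<le> n \<Longrightarrow> i < n \<Longrightarrow> 0 \<le> q n i \<and> q n i \<le> 1"
    and "subcritical \<delta> q"
    and "\<exists>B. \<forall>n\<ge>2. \<forall>i<n. iota (q n i) (q n i) * real n \<le> B"
  shows "\<exists>C>0. \<exists>y0::nat. \<forall>y\<ge>y0.
           limsup (\<lambda>n. ereal (Max ((\<lambda>i. prob_learn n \<delta> (p n) (q n) i y) ` {..<n})))
             \<le> ereal (exp (- C * real y))"
proof -
  obtain B0 where B0: "\<forall>n\<ge>2. \<forall>i<n. iota (q n i) (q n i) * real n \<le> B0" using assms(6) by blast
  define B where "B = max B0 1"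
  have Bpos: "0 < B" by (simp add: B_def)
  have qB: "q n i ^ 2 * real n \<le> B" if "2 \<le> n" "i < n" for n i
    using B0 that by (fastforce simp: B_def iota_def power2_eq_square)
  let ?sr = "\<lambda>n. ereal (spectral_radius (interaction_matrix n \<delta> (q n)))"
  have "limsup ?sr < 1" using assms(5) by (simp add: subcritical_def)
  then obtain r where r: "limsup ?sr < r" "r < 1" using dense by blast
  have "r \<noteq> -\<infinity>" using r(1) by auto
  moreover have "r \<noteq> \<infinity>" using r(2) by auto
  ultimately obtain L0 where L0: "r = ereal L0" by (cases r) auto
  define L where "L = max L0 (1/2)"
  have L: "0 < L" "L < 1" using r(2) L0 by (auto simp: L_def)
  have ev_sr: "eventually (\<lambda>n. ?sr n < ereal L) sequentially"
  proof -
    have "limsup ?sr < ereal L" using r(1) L0 by (simp add: L_def) (metis ereal_less_eq(3) max.cobounded1 order_less_le_trans)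
    from Limsup_lessD[where y="ereal L" and F=sequentially and f="?sr", OF this] show ?thesis .
  qed
  then obtain N where N: "\<And>n. n \<ge> N \<Longrightarrow> spectral_radius (interaction_matrix n \<delta> (q n)) < L"
    by (auto simp: eventually_sequentially)
  define b where "b = ln (2 / (1 + L))"
  have eb: "exp b = 2 / (1 + L)" using L by (simp add: b_def)
  have bpos: "0 < b" using L by (simp add: b_def)
  define \<kappa> where "\<kappa> = exp b * L"
  have \<kappa>: "0 < \<kappa>" "\<kappa> < 1" using L by (auto simp: \<kappa>_def eb field_simps)
  define z where "z = 1 + b * (1 - \<kappa>) / (B + b)"
  have z1: "1 < z" using bpos \<kappa> Bpos by (simp add: z_def)
  have zkey: "(z - 1) * B + z * \<kappa> * b \<le> b"
  proof -
    have "(z - 1) * (B + b) = b * (1 - \<kappa>)" using Bpos bpos by (simp add: z_def)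
    moreover have "(z - 1) * (\<kappa> * b) \<le> (z - 1) * b" using z1 \<kappa> bpos by (intro mult_left_mono) auto
    ultimately show ?thesis by (simp add: algebra_simps)
  qed
  define C where "C = ln z / 2"
  have lz: "0 < ln z" using z1 by simp
  have Cpos: "0 < C" using lz by (simp add: C_def)
  define y0 where "y0 = nat \<lceil>2 * b / ln z\<rceil>"
  have bound: "prob_learn n \<delta> (p n) (q n) i y \<le> exp b / z ^ y"
    if n: "n \<ge> max N 2" and i: "i < n" for n i y
  proof -
    have n2: "2 \<le> n" and nN: "N \<le> n" using n by auto
    define \<epsilon> where "\<epsilon> = sqrt (B / real n)"
    have \<epsilon>pos: "0 < \<epsilon>" using Bpos n2 by (simp add: \<epsilon>_def)
    have n\<epsilon>: "real n * \<epsilon>^2 = B" using Bpos n2 by (simp add: \<epsilon>_def)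
    define a where "a = b / \<epsilon>"
    have apos: "0 \<le> a" using bpos \<epsilon>pos by (simp add: a_def)
    have qb: "\<And>j. j < n \<Longrightarrow> 0 \<le> q n j \<and> q n j \<le> 1" using assms(4) n2 by blast
    have qe: "q n j \<le> \<epsilon>" if "j < n" for j
    proof -
      have "q n j ^ 2 \<le> B / real n" using qB[OF n2 that] n2 by (simp add: field_simps)
      then have "sqrt (q n j ^ 2) \<le> \<epsilon>" unfolding \<epsilon>_def by (rule real_sqrt_le_mono)
      then show ?thesis using qb[OF that] by simp
    qed
    have aq: "a * q n j \<le> b" if "j < n" for j
    proof -
      have "a * q n j \<le> a * \<epsilon>" using qe[OF that] apos by (rule mult_left_mono)
      then show ?thesis using \<epsilon>pos by (simp add: a_def)
    qed
    have sumq: "(\<Sum>j<n. q n j) \<le> real n * \<epsilon>"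
      using sum_mono[of "{..<n}" "q n" "\<lambda>_. \<epsilon>"] qe by simp
    have ssq: "\<delta> * (\<Sum>j<n. q n j ^ 2) \<le> L"
      using sr_lower[of n \<delta> "q n"] N[OF nN] n2 assms(1) by simp
    have cond: "(z - 1) * (\<Sum>j<n. q n j) + z * exp b * a * (\<delta> * (\<Sum>j<n. q n j ^ 2)) \<le> a"
    proof -
      have "(z - 1) * (\<Sum>j<n. q n j) \<le> (z - 1) * (real n * \<epsilon>)"
        using sumq z1 by (intro mult_left_mono) auto
      moreover have "z * exp b * a * (\<delta> * (\<Sum>j<n. q n j ^ 2)) \<le> z * exp b * a * L"
        using ssq z1 apos by (intro mult_left_mono) auto
      moreover have "(z - 1) * (real n * \<epsilon>) + z * exp b * a * L \<le> a"
      proof -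
        have "((z - 1) * (real n * \<epsilon>) + z * exp b * a * L) * \<epsilon> = (z - 1) * B + z * \<kappa> * b"
          using \<epsilon>pos n\<epsilon>[symmetric] by (simp add: a_def \<kappa>_def power2_eq_square field_simps)
        also have "\<dots> \<le> b" by (rule zkey)
        also have "b = a * \<epsilon>" using \<epsilon>pos by (simp add: a_def)
        finally show ?thesis using \<epsilon>pos by simp
      qed
      ultimately show ?thesis by linarith
    qed
    have PV: "\<And>w. w < n \<Longrightarrow> (\<Prod>j\<in>{j. j < n \<and> j \<noteq> w}. 1 + q n w * q n j * (z * (1 - \<delta> + \<delta> * exp (a * q n j)) - 1)) \<le> exp (a * q n w)"
      by (rule PV_num[where b=b]) (use assms(1,2) qb z1 apos aq cond in auto)
    have "prob_learn n \<delta> (p n) (q n) i y \<le> exp (a * q n i) / z ^ y"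
      by (rule prob_learn_bound) (use assms(1,2) qb z1 apos PV i in auto)
    also have "\<dots> \<le> exp b / z ^ y"
      using aq[OF i] z1 by (intro divide_right_mono) auto
    finally show ?thesis .
  qed
  have ebC: "exp b / z ^ y \<le> exp (- C * real y)" if "y \<ge> y0" for y
  proof -
    have "2 * b / ln z \<le> real y" using that by (simp add: y0_def)
    then have "2 * b \<le> real y * ln z" using lz by (simp add: field_simps)
    then have "b - real y * ln z \<le> - C * real y" by (simp add: C_def field_simps)
    moreover have "z ^ y = exp (real y * ln z)" using z1 by (simp add: exp_of_nat_mult)
    ultimately show ?thesis by (simp add: exp_diff[symmetric])
  qed
  show ?thesis
  proof (intro exI[of _ C] conjI Cpos exI[of _ y0] allI impI)
    fix y assume y: "y0 \<le> y"
    show "limsup (\<lambda>n. ereal (Max ((\<lambda>i. prob_learn n \<delta> (p n) (q n) i y) ` {..<n}))) \<le> ereal (exp (- C * real y))"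
    proof (rule Limsup_bounded)
      show "eventually (\<lambda>n. ereal (Max ((\<lambda>i. prob_learn n \<delta> (p n) (q n) i y) ` {..<n})) \<le> ereal (exp (- C * real y))) sequentially"
        unfolding eventually_sequentially
      proof (intro exI[of _ "max N 2"] allI impI)
        fix n assume n: "max N 2 \<le> n"
        have "Max ((\<lambda>i. prob_learn n \<delta> (p n) (q n) i y) ` {..<n}) \<le> exp (- C * real y)"
        proof (rule Max.boundedI)
          show "(\<lambda>i. prob_learn n \<delta> (p n) (q n) i y) ` {..<n} \<noteq> {}" using n by (auto simp: lessThan_empty_iff)
        next
          fix x assume "x \<in> (\<lambda>i. prob_learn n \<delta> (p n) (q n) i y) ` {..<n}"
          then obtain i where i: "i < n" "x = prob_learn n \<delta> (p n) (q n) i y" by auto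
          show "x \<le> exp (- C * real y)" using bound[OF n i(1), of y] ebC[OF y] i(2) by linarith
        qed simp
        then show "ereal (Max ((\<lambda>i. prob_learn n \<delta> (p n) (q n) i y) ` {..<n})) \<le> ereal (exp (- C * real y))"
          by simp
      qed
    qed
  qed
qed


end
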